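(* Let $m,d_o,N_D\ge1$ be integers, $d=md_o$, and let $(x^j,y^j)_{j=1}^{N_D}$ be data with $x^j\in\mathbb R^{d_o}$ and $y^j\in\{1,\dots,m\}$. For $q=(q^1,\dots,q^m)\in\mathbb R^d$ with $q^i\in\mathbb R^{d_o}$ let \[p(y^j\mid q)=\frac{\exp(\langle x^j,q^{y^j}\rangle)}{\sum_{k=1}^m\exp(\langle x^j,q^k\rangle)},\qquad U(q)=\frac{\|q\|^2}{2\sigma_0^2}+\mathrm{const}-\sum_{j=1}^{N_D}\log p(y^j\mid q),\] with $\sigma_0>0$. Then \[\sup_{q\in\mathbb R^d}\|\nabla^2U(q)\|\le\sigma_0^{-2}+\Big\|\sum_{l=1}^{N_D}x^l(x^l)^T\Big\|,\qquad \sup_{q\in\mathbb R^d}\|\nabla^3U(q)\|_{\{1,2\}\{3\}}\le6\,\Big\|\sum_{l=1}^{N_D}x^l(x^l)^T\Big(\sum_{k=1}^{N_D}\langle x^l,x^k\rangle^2\Big)\Big\|^{1/2}.\]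
   Context: $\|\cdot\|$ of a matrix is the spectral (operator) norm. For $A\in\mathbb R^{d\times d\times d}$, $\|A\|_{\{1,2\}\{3\}}=\sup\{\sum_{i,j,k}A_{ijk}x_{ij}y_k:\sum_{i,j}x_{ij}^2\le1,\sum_ky_k^2\le1\}$, and $(\nabla^3U)_{ijk}=\partial_i\partial_j\partial_kU$. The constant in $U$ (the log-normalization of the Gaussian prior) does not depend on $q$. *)

theory Defs
  imports "HOL-Analysis.Analysis"
begin

text \<open>Parameters q in R^d, d = m * d_o, are represented as q :: real^'o^'m,
  with block q $ k = q^k in R^{d_o}. Coordinates of R^d are indexed by pairs (k, a).\<close>

definition coord :: "('m::finite \<times> 'o::finite) \<Rightarrow> real^'o^'m" where
  "coord i = axis (fst i) (axis (snd i) 1)"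

definition pdiff :: "('m::finite \<times> 'o::finite) \<Rightarrow> (real^'o^'m \<Rightarrow> real) \<Rightarrow> real^'o^'m \<Rightarrow> real" where
  "pdiff i f q = deriv (\<lambda>t. f (q + t *\<^sub>R coord i)) 0"

definition spec_norm :: "('i::finite \<Rightarrow> 'i \<Rightarrow> real) \<Rightarrow> real" where
  "spec_norm M = Sup {(\<Sum>i\<in>UNIV. \<Sum>j\<in>UNIV. x i * M i j * y j) | x y.
      (\<Sum>i\<in>UNIV. (x i)\<^sup>2) \<le> 1 \<and> (\<Sum>j\<in>UNIV. (y j)\<^sup>2) \<le> 1}"

definition tensor_norm_12_3 :: "('i::finite \<Rightarrow> 'i \<Rightarrow> 'i \<Rightarrow> real) \<Rightarrow> real" where
  "tensor_norm_12_3 A = Sup {(\<Sum>i\<in>UNIV. \<Sum>j\<in>UNIV. \<Sum>k\<in>UNIV. A i j k * x i j * y k) | x y.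
      (\<Sum>i\<in>UNIV. \<Sum>j\<in>UNIV. (x i j)\<^sup>2) \<le> 1 \<and> (\<Sum>k\<in>UNIV. (y k)\<^sup>2) \<le> 1}"

definition lik :: "(nat \<Rightarrow> real^'o) \<Rightarrow> (nat \<Rightarrow> 'm::finite) \<Rightarrow> nat \<Rightarrow> real^'o::finite^'m \<Rightarrow> real" where
  "lik x y j q = exp (x j \<bullet> (q $ y j)) / (\<Sum>k\<in>UNIV. exp (x j \<bullet> (q $ k)))"

definition potU :: "real \<Rightarrow> real \<Rightarrow> nat \<Rightarrow> (nat \<Rightarrow> real^'o) \<Rightarrow> (nat \<Rightarrow> 'm::finite)
    \<Rightarrow> real^'o::finite^'m \<Rightarrow> real" where
  "potU \<sigma>0 c N x y q = (norm q)\<^sup>2 / (2 * \<sigma>0\<^sup>2) + c - (\<Sum>j=1..N. ln (lik x y j q))"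

end

theory Submission
  imports Defs
begin


definition SS :: "(nat \<Rightarrow> real^'o::finite) \<Rightarrow> nat \<Rightarrow> real^'o^'m::finite \<Rightarrow> real" where
  "SS x l q = (\<Sum>k\<in>UNIV. exp (x l \<bullet> (q $ k)))"
definition P :: "(nat \<Rightarrow> real^'o::finite) \<Rightarrow> nat \<Rightarrow> real^'o^'m::finite \<Rightarrow> 'm \<Rightarrow> real" where
  "P x l q k = exp (x l \<bullet> (q $ k)) / SS x l q"
definition w :: "(nat \<Rightarrow> real^'o::finite) \<Rightarrow> nat \<Rightarrow> real^'o^'m::finite \<Rightarrow> 'm \<Rightarrow> real" where
  "w x l e k = x l \<bullet> (e $ k)"
definition EP :: "(nat \<Rightarrow> real^'o::finite) \<Rightarrow> nat \<Rightarrow> real^'o^'m::finite \<Rightarrow> ('m \<Rightarrow> real) \<Rightarrow> real" where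
  "EP x l q f = (\<Sum>k\<in>UNIV. P x l q k * f k)"

lemma SS_pos: "SS x l q > 0"
  unfolding SS_def by (rule sum_pos) auto

lemma P_pos: "P x l q k > 0"
  unfolding P_def using SS_pos[of x l q] by auto

lemma P_sum: "(\<Sum>k\<in>UNIV. P x l q k) = 1"
  unfolding P_def using SS_pos[of x l q] by (simp add: sum_divide_distrib[symmetric] SS_def)

lemma P_le1: "P x l q k \<le> 1"
proof -
  have "P x l q k \<le> (\<Sum>k\<in>UNIV. P x l q k)"
    by (rule member_le_sum) (auto intro: less_imp_le P_pos)
  thus ?thesis using P_sum[of x l q] by simp
qed

lemma z_shift: "x l \<bullet> ((q + t *\<^sub>R e) $ k) = x l \<bullet> (q $ k) + t * w x l e k"
  by (simp add: w_def inner_add_right)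

lemma dSS: "((\<lambda>t. SS x l (q + t *\<^sub>R e)) has_real_derivative
    (\<Sum>k\<in>UNIV. exp (x l \<bullet> (q $ k)) * w x l e k)) (at 0)"
  unfolding SS_def z_shift
  by (rule DERIV_sum) (auto intro!: derivative_eq_intros)

lemma dP: "((\<lambda>t. P x l (q + t *\<^sub>R e) k) has_real_derivative
    P x l q k * (w x l e k - EP x l q (w x l e))) (at 0)"
proof -
  have e: "(\<lambda>t. P x l (q + t *\<^sub>R e) k) = (\<lambda>t. exp (x l \<bullet> (q $ k) + t * w x l e k) / SS x l (q + t *\<^sub>R e))"
    unfolding P_def z_shift by simp
  have d1: "((\<lambda>t. exp (x l \<bullet> (q $ k) + t * w x l e k)) has_real_derivative exp (x l \<bullet> (q $ k)) * w x l e k) (at 0)"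
    by (auto intro!: derivative_eq_intros)
  have "((\<lambda>t. exp (x l \<bullet> (q $ k) + t * w x l e k) / SS x l (q + t *\<^sub>R e)) has_real_derivative
     (exp (x l \<bullet> (q $ k)) * w x l e k * SS x l q - exp (x l \<bullet> (q $ k)) * (\<Sum>k\<in>UNIV. exp (x l \<bullet> (q $ k)) * w x l e k))
       / (SS x l q * SS x l q)) (at 0)"
    using DERIV_divide[OF d1 dSS[of x l q e]] SS_pos[of x l q] by simp
  moreover have "(exp (x l \<bullet> (q $ k)) * w x l e k * SS x l q - exp (x l \<bullet> (q $ k)) * (\<Sum>k\<in>UNIV. exp (x l \<bullet> (q $ k)) * w x l e k))
       / (SS x l q * SS x l q) = P x l q k * (w x l e k - EP x l q (w x l e))"
    using SS_pos[of x l q]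
    by (simp add: P_def EP_def field_simps sum_divide_distrib[symmetric] sum_distrib_left)
  ultimately show ?thesis by (simp add: e)
qed

lemma dEP: "((\<lambda>t. EP x l (q + t *\<^sub>R e) f) has_real_derivative
    EP x l q (\<lambda>k. f k * w x l e k) - EP x l q f * EP x l q (w x l e)) (at 0)"
proof -
  have ee: "(\<lambda>t. EP x l (q + t *\<^sub>R e) f) = (\<lambda>t. \<Sum>k\<in>UNIV. P x l (q + t *\<^sub>R e) k * f k)"
    by (simp add: EP_def)
  have "((\<lambda>t. EP x l (q + t *\<^sub>R e) f) has_real_derivative
    (\<Sum>k\<in>UNIV. P x l q k * (w x l e k - EP x l q (w x l e)) * f k)) (at 0)"
    unfolding ee by (rule DERIV_sum) (auto intro!: derivative_eq_intros dP)
  moreover have "(\<Sum>k\<in>UNIV. P x l q k * (w x l e k - EP x l q (w x l e)) * f k)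
     = EP x l q (\<lambda>k. f k * w x l e k) - EP x l q f * EP x l q (w x l e)"
    unfolding EP_def[of x l q f] EP_def[of x l q "\<lambda>k. f k * w x l e k"]
    by (simp add: right_diff_distrib left_diff_distrib sum_subtractf sum_distrib_left mult_ac)
  ultimately show ?thesis by simp
qed

lemma dlnSS: "((\<lambda>t. ln (SS x l (q + t *\<^sub>R e))) has_real_derivative EP x l q (w x l e)) (at 0)"
proof -
  have "((\<lambda>t. ln (SS x l (q + t *\<^sub>R e))) has_real_derivative
     (\<Sum>k\<in>UNIV. exp (x l \<bullet> (q $ k)) * w x l e k) / SS x l q) (at 0)"
  proof -
    have "DERIV ln (SS x l (q + 0 *\<^sub>R e)) :> 1 / SS x l q"
      using DERIV_ln_divide[OF SS_pos[of x l q]] by simp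
    from DERIV_chain2[OF this dSS[of x l q e]] show ?thesis by simp
  qed
  thus ?thesis by (simp add: EP_def P_def sum_divide_distrib)
qed

definition F1 :: "real \<Rightarrow> nat \<Rightarrow> (nat \<Rightarrow> real^'o::finite) \<Rightarrow> (nat \<Rightarrow> 'm::finite) \<Rightarrow> real^'o^'m \<Rightarrow> real^'o^'m \<Rightarrow> real" where
  "F1 s N x y e q = inner q e / s\<^sup>2 - (\<Sum>l=1..N. w x l e (y l) - EP x l q (w x l e))"

definition F2 :: "real \<Rightarrow> nat \<Rightarrow> (nat \<Rightarrow> real^'o::finite) \<Rightarrow> real^'o^'m::finite \<Rightarrow> real^'o^'m \<Rightarrow> real^'o^'m \<Rightarrow> real" where
  "F2 s N x e e' q = inner e e' / s\<^sup>2 + (\<Sum>l=1..N. EP x l q (\<lambda>k. w x l e k * w x l e' k) - EP x l q (w x l e) * EP x l q (w x l e'))"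

definition F3 :: "nat \<Rightarrow> (nat \<Rightarrow> real^'o::finite) \<Rightarrow> real^'o^'m::finite \<Rightarrow> real^'o^'m \<Rightarrow> real^'o^'m \<Rightarrow> real^'o^'m \<Rightarrow> real" where
  "F3 N x e e' e'' q = (\<Sum>l=1..N. EP x l q (\<lambda>k. w x l e k * w x l e' k * w x l e'' k)
     - EP x l q (\<lambda>k. w x l e k * w x l e' k) * EP x l q (w x l e'')
     - EP x l q (\<lambda>k. w x l e k * w x l e'' k) * EP x l q (w x l e')
     - EP x l q (w x l e) * EP x l q (\<lambda>k. w x l e' k * w x l e'' k)
     + 2 * EP x l q (w x l e) * EP x l q (w x l e') * EP x l q (w x l e''))"

lemma lnlik: "ln (lik x y l q) = x l \<bullet> (q $ y l) - ln (SS x l q)"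
  using SS_pos[of x l q] by (simp add: lik_def SS_def[symmetric] ln_div)

lemma nsq: "(norm (q + t *\<^sub>R e))\<^sup>2 = inner q q + 2 * t * inner q e + t\<^sup>2 * inner e e"
  unfolding power2_norm_eq_inner by (simp add: inner_add_left inner_add_right inner_commute algebra_simps power2_eq_square)

lemma quad: "((\<lambda>t. a + t * b + t\<^sup>2 * d) has_real_derivative b) (at 0)"
  by (auto intro!: derivative_eq_intros)

lemma dU: "((\<lambda>t. potU s c N x y (q + t *\<^sub>R e)) has_real_derivative F1 s N x y e q) (at 0)"
proof -
  have ee: "(\<lambda>t. potU s c N x y (q + t *\<^sub>R e)) = (\<lambda>t. (inner q q / (2 * s\<^sup>2) + c) + t * (inner q e / s\<^sup>2) + t\<^sup>2 * (inner e e / (2 * s\<^sup>2))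
     - (\<Sum>l=1..N. x l \<bullet> (q $ y l) + t * w x l e (y l) - ln (SS x l (q + t *\<^sub>R e))))"
    by (simp add: potU_def lnlik nsq w_def inner_add_right add_divide_distrib ac_simps)
  have h2: "((\<lambda>t. \<Sum>l=1..N. x l \<bullet> (q $ y l) + t * w x l e (y l) - ln (SS x l (q + t *\<^sub>R e))) has_real_derivative
     (\<Sum>l=1..N. w x l e (y l) - EP x l q (w x l e))) (at 0)"
    by (rule DERIV_sum, rule DERIV_diff[OF _ dlnSS]) (auto intro!: derivative_eq_intros)
  show ?thesis unfolding ee F1_def by (rule DERIV_diff[OF quad h2])
qed

lemma dF1: "((\<lambda>t. F1 s N x y e (q + t *\<^sub>R e')) has_real_derivative F2 s N x e e' q) (at 0)"
proof -
  have ee: "(\<lambda>t. F1 s N x y e (q + t *\<^sub>R e')) = (\<lambda>t. inner q e / s\<^sup>2 + t * (inner e' e / s\<^sup>2) + t\<^sup>2 * 0 - (\<Sum>l=1..N. w x l e (y l) - EP x l (q + t *\<^sub>R e') (w x l e)))"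
    by (simp add: F1_def inner_add_left add_divide_distrib)
  have h2: "((\<lambda>t. \<Sum>l=1..N. w x l e (y l) - EP x l (q + t *\<^sub>R e') (w x l e)) has_real_derivative
     (\<Sum>l=1..N. 0 - (EP x l q (\<lambda>k. w x l e k * w x l e' k) - EP x l q (w x l e) * EP x l q (w x l e')))) (at 0)"
    by (rule DERIV_sum, rule DERIV_diff[OF _ dEP]) (auto intro!: derivative_eq_intros)
  have v: "F2 s N x e e' q = inner e' e / s\<^sup>2 - (\<Sum>l=1..N. 0 - (EP x l q (\<lambda>k. w x l e k * w x l e' k) - EP x l q (w x l e) * EP x l q (w x l e')))"
    by (simp add: F2_def inner_commute[of e' e] sum_negf[symmetric])
  show ?thesis unfolding ee v by (rule DERIV_diff[OF quad h2])
qed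

lemma dEP2: "((\<lambda>t. EP x l (q + t *\<^sub>R e) f * EP x l (q + t *\<^sub>R e) g) has_real_derivative
    (EP x l q (\<lambda>k. f k * w x l e k) - EP x l q f * EP x l q (w x l e)) * EP x l q g
    + EP x l q f * (EP x l q (\<lambda>k. g k * w x l e k) - EP x l q g * EP x l q (w x l e))) (at 0)"
  using DERIV_mult'[OF dEP[of x l q e f] dEP[of x l q e g]] by (simp add: add.commute)

lemma dF2: "((\<lambda>t. F2 s N x e e' (q + t *\<^sub>R e'')) has_real_derivative F3 N x e e' e'' q) (at 0)"
proof -
  have ee: "(\<lambda>t. F2 s N x e e' (q + t *\<^sub>R e'')) = (\<lambda>t. inner e e' / s\<^sup>2 + (\<Sum>l=1..N. EP x l (q + t *\<^sub>R e'') (\<lambda>k. w x l e k * w x l e' k) - EP x l (q + t *\<^sub>R e'') (w x l e) * EP x l (q + t *\<^sub>R e'') (w x l e')))"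
    by (simp add: F2_def)
  have "((\<lambda>t. inner e e' / s\<^sup>2 + (\<Sum>l=1..N. EP x l (q + t *\<^sub>R e'') (\<lambda>k. w x l e k * w x l e' k) - EP x l (q + t *\<^sub>R e'') (w x l e) * EP x l (q + t *\<^sub>R e'') (w x l e'))) has_real_derivative
     0 + (\<Sum>l=1..N. (EP x l q (\<lambda>k. w x l e k * w x l e' k * w x l e'' k) - EP x l q (\<lambda>k. w x l e k * w x l e' k) * EP x l q (w x l e''))
        - ((EP x l q (\<lambda>k. w x l e k * w x l e'' k) - EP x l q (w x l e) * EP x l q (w x l e'')) * EP x l q (w x l e')
          + EP x l q (w x l e) * (EP x l q (\<lambda>k. w x l e' k * w x l e'' k) - EP x l q (w x l e') * EP x l q (w x l e''))))) (at 0)"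
    by (rule DERIV_add DERIV_const DERIV_sum DERIV_diff dEP2 dEP)+
  thus ?thesis unfolding ee F3_def by (simp add: algebra_simps)
qed

lemma pdiff_eq: "(\<And>q. ((\<lambda>t. f (q + t *\<^sub>R coord i)) has_real_derivative g q) (at 0)) \<Longrightarrow> pdiff i f = g"
  unfolding pdiff_def by (rule ext) (rule DERIV_imp_deriv)

lemma pdiff3:
  "pdiff i (pdiff j (pdiff k (potU s c N x y))) q = F3 N x (coord k) (coord j) (coord i) q"
  "pdiff i (pdiff j (potU s c N x y)) q = F2 s N x (coord j) (coord i) q"
proof -
  have 1: "pdiff k (potU s c N x y) = F1 s N x y (coord k)" for k
    by (rule pdiff_eq) (rule dU)
  have 2: "pdiff j (F1 s N x y (coord k)) = F2 s N x (coord k) (coord j)" for j k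
    by (rule pdiff_eq) (rule dF1)
  have 3: "pdiff i (F2 s N x (coord k) (coord j)) = F3 N x (coord k) (coord j) (coord i)" for i j k
    by (rule pdiff_eq) (rule dF2)
  show "pdiff i (pdiff j (pdiff k (potU s c N x y))) q = F3 N x (coord k) (coord j) (coord i) q"
    by (simp add: 1 2 3)
  show "pdiff i (pdiff j (potU s c N x y)) q = F2 s N x (coord j) (coord i) q"
    by (simp add: 1 2)
qed

lemma sum_pair: "(\<Sum>i\<in>(UNIV::('a::finite \<times> 'b::finite) set). f i) = (\<Sum>k\<in>UNIV. \<Sum>a\<in>UNIV. f (k, a))"
  by (simp add: UNIV_Times_UNIV[symmetric] sum.cartesian_product del: UNIV_Times_UNIV)

definition vecof :: "('m::finite \<times> 'o::finite \<Rightarrow> real) \<Rightarrow> real^'o^'m" where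
  "vecof u = (\<chi> k. \<chi> a. u (k, a))"

lemma axis_nth': "axis i x $ j = (if j = i then x else 0)"
  by (simp add: axis_def)

lemma w_coord: "w x l (coord (k0, a)) k = (if k = k0 then x l $ a else 0)"
  by (simp add: w_def coord_def axis_nth' inner_axis)

lemma inner_coord: "inner (coord (k0, a)) e = e $ k0 $ a"
  by (simp add: coord_def inner_axis')

lemma w_vecof: "(\<Sum>i\<in>UNIV. u i * w x l (coord i) k) = w x l (vecof u) k"
proof -
  have "(\<Sum>i\<in>UNIV. u i * w x l (coord i) k) = (\<Sum>ka\<in>UNIV. if k = ka then (\<Sum>a\<in>UNIV. u (ka, a) * x l $ a) else 0)"
    unfolding sum_pair by (rule sum.cong) (auto simp: w_coord)
  also have "\<dots> = w x l (vecof u) k"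
    by (simp add: w_def vecof_def inner_vec_def mult.commute)
  finally show ?thesis .
qed

lemma inner_vecof: "(\<Sum>i\<in>UNIV. u i * inner (coord i) e) = inner (vecof u) e"
  unfolding sum_pair inner_coord by (simp add: vecof_def inner_vec_def)

definition lin :: "(real^'o::finite^'m::finite \<Rightarrow> real) \<Rightarrow> bool" where
  "lin \<phi> \<longleftrightarrow> (\<forall>u. (\<Sum>i\<in>UNIV. u i * \<phi> (coord i)) = \<phi> (vecof u))"

lemma lin_add: "lin f \<Longrightarrow> lin g \<Longrightarrow> lin (\<lambda>e. f e + g e)"
  by (simp add: lin_def distrib_left sum.distrib)
lemma lin_diff: "lin f \<Longrightarrow> lin g \<Longrightarrow> lin (\<lambda>e. f e - g e)"
  by (simp add: lin_def right_diff_distrib sum_subtractf)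
lemma lin_multc: "lin f \<Longrightarrow> lin (\<lambda>e. f e * c)"
  by (simp add: lin_def sum_distrib_right[symmetric] mult.assoc[symmetric])
lemma lin_cmult: "lin f \<Longrightarrow> lin (\<lambda>e. c * f e)"
  by (simp add: lin_def sum_distrib_left[symmetric] mult.left_commute)
lemma lin_divc: "lin f \<Longrightarrow> lin (\<lambda>e. f e / c)"
  by (simp add: lin_def sum_divide_distrib[symmetric])
lemma lin_sum: "(\<And>l. l \<in> L \<Longrightarrow> lin (f l)) \<Longrightarrow> lin (\<lambda>e. \<Sum>l\<in>L. f l e)"
  unfolding lin_def
proof (intro allI)
  fix u assume a: "\<And>l. l \<in> L \<Longrightarrow> \<forall>u. (\<Sum>i\<in>UNIV. u i * f l (coord i)) = f l (vecof u)"
  have "(\<Sum>i\<in>UNIV. u i * (\<Sum>l\<in>L. f l (coord i))) = (\<Sum>l\<in>L. \<Sum>i\<in>UNIV. u i * f l (coord i))"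
    by (simp add: sum_distrib_left sum.swap[of _ UNIV])
  also have "\<dots> = (\<Sum>l\<in>L. f l (vecof u))" using a by simp
  finally show "(\<Sum>i\<in>UNIV. u i * (\<Sum>l\<in>L. f l (coord i))) = (\<Sum>l\<in>L. f l (vecof u))" .
qed

lemma lin_inner1: "lin (\<lambda>e. inner e e')"
  by (simp add: lin_def inner_vecof)
lemma lin_inner2: "lin (\<lambda>e'. inner e e')"
  by (simp add: lin_def inner_vecof inner_commute[of e])

lemma lin_EP: "lin (\<lambda>e. EP x l q (\<lambda>k. w x l e k * g k))"
  unfolding lin_def
proof
  fix u
  have "(\<Sum>i\<in>UNIV. u i * EP x l q (\<lambda>k. w x l (coord i) k * g k))
      = (\<Sum>i\<in>UNIV. \<Sum>k\<in>UNIV. P x l q k * g k * (u i * w x l (coord i) k))"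
    by (simp add: EP_def sum_distrib_left mult_ac)
  also have "\<dots> = (\<Sum>k\<in>UNIV. \<Sum>i\<in>UNIV. P x l q k * g k * (u i * w x l (coord i) k))"
    by (rule sum.swap)
  also have "\<dots> = (\<Sum>k\<in>UNIV. P x l q k * g k * w x l (vecof u) k)"
    by (simp add: sum_distrib_left[symmetric] w_vecof)
  also have "\<dots> = EP x l q (\<lambda>k. w x l (vecof u) k * g k)"
    by (simp add: EP_def mult_ac)
  finally show "(\<Sum>i\<in>UNIV. u i * EP x l q (\<lambda>k. w x l (coord i) k * g k)) = EP x l q (\<lambda>k. w x l (vecof u) k * g k)" .
qed

lemma lin_EP0: "lin (\<lambda>e. EP x l q (w x l e))"
  using lin_EP[of x l q "\<lambda>_. 1"] by simp
lemma lin_EPr: "lin (\<lambda>e. EP x l q (\<lambda>k. g k * w x l e k))"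
  using lin_EP[of x l q g] by (simp add: mult.commute)
lemma lin_EP3: "lin (\<lambda>e. EP x l q (\<lambda>k. w x l e k * g k * h k))"
  using lin_EP[of x l q "\<lambda>k. g k * h k"] by (simp add: mult.assoc)

lemma lin_F2a: "lin (\<lambda>e. F2 s N x e e' q)"
  unfolding F2_def
  by (intro lin_add lin_divc lin_inner1 lin_sum lin_diff lin_EP lin_multc lin_EP0)

lemma lin_F2b: "lin (\<lambda>e'. F2 s N x e e' q)"
  unfolding F2_def
  by (intro lin_add lin_divc lin_inner2 lin_sum lin_diff lin_EPr lin_cmult lin_EP0)

lemma lin_F3: "lin (\<lambda>e. F3 N x e e' e'' q)"
  unfolding F3_def
  by (intro lin_add lin_sum lin_diff lin_EP3 lin_multc lin_cmult lin_EP lin_EP0)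

lemma EP_lin: "EP x l q (\<lambda>k. a * f k + b * g k) = a * EP x l q f + b * EP x l q g"
  by (simp add: EP_def distrib_left sum.distrib sum_distrib_left mult_ac)

lemma EP_const: "EP x l q (\<lambda>k. c) = c"
  using P_sum[of x l q] by (simp add: EP_def sum_distrib_right[symmetric])

lemma EP_nonneg: "(\<And>k. f k \<ge> 0) \<Longrightarrow> EP x l q f \<ge> 0"
  unfolding EP_def by (intro sum_nonneg mult_nonneg_nonneg) (auto intro: less_imp_le P_pos)

lemma var_nonneg: "(EP x l q f)\<^sup>2 \<le> EP x l q (\<lambda>k. (f k)\<^sup>2)"
proof -
  define m where "m = EP x l q f"
  have "0 \<le> EP x l q (\<lambda>k. (f k - m)\<^sup>2)" by (rule EP_nonneg) simp
  also have "EP x l q (\<lambda>k. (f k - m)\<^sup>2) = EP x l q (\<lambda>k. 1 * (f k)\<^sup>2 + (-2*m) * f k) + m\<^sup>2"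
    using P_sum[of x l q] by (simp add: EP_def power2_diff algebra_simps sum.distrib sum_subtractf sum_distrib_left[symmetric] sum_distrib_right[symmetric])
  also have "\<dots> = EP x l q (\<lambda>k. (f k)\<^sup>2) - m\<^sup>2"
    unfolding EP_lin m_def by (simp add: power2_eq_square)
  finally show ?thesis unfolding m_def by simp
qed

lemma cov_le: "EP x l q (\<lambda>k. a k * b k) - EP x l q a * EP x l q b
   \<le> (EP x l q (\<lambda>k. (a k)\<^sup>2) + EP x l q (\<lambda>k. (b k)\<^sup>2)) / 2"
proof -
  have v: "(EP x l q (\<lambda>k. a k - b k))\<^sup>2 \<le> EP x l q (\<lambda>k. (a k - b k)\<^sup>2)" by (rule var_nonneg)
  have e1: "EP x l q (\<lambda>k. a k - b k) = EP x l q a - EP x l q b"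
    using EP_lin[of x l q 1 a "-1" b] by simp
  have e2: "EP x l q (\<lambda>k. (a k - b k)\<^sup>2) = EP x l q (\<lambda>k. (a k)\<^sup>2) - 2 * EP x l q (\<lambda>k. a k * b k) + EP x l q (\<lambda>k. (b k)\<^sup>2)"
    by (simp add: EP_def power2_diff algebra_simps sum.distrib sum_subtractf sum_distrib_left)
  have h: "(EP x l q a)\<^sup>2 + (EP x l q b)\<^sup>2 - 2 * (EP x l q a * EP x l q b) \<le> EP x l q (\<lambda>k. (a k)\<^sup>2) - 2 * EP x l q (\<lambda>k. a k * b k) + EP x l q (\<lambda>k. (b k)\<^sup>2)"
    using v unfolding e1 e2 by (simp add: power2_diff mult.assoc)
  have "0 \<le> (EP x l q a)\<^sup>2" "0 \<le> (EP x l q b)\<^sup>2" by auto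
  with h have "2 * EP x l q (\<lambda>k. a k * b k) - 2 * (EP x l q a * EP x l q b) \<le> EP x l q (\<lambda>k. (a k)\<^sup>2) + EP x l q (\<lambda>k. (b k)\<^sup>2)"
    by linarith
  thus ?thesis by (simp add: field_simps)
qed

lemma EP_sq_le: "EP x l q (\<lambda>k. (f k)\<^sup>2) \<le> (\<Sum>k\<in>UNIV. (f k)\<^sup>2)"
  unfolding EP_def
proof (rule sum_mono)
  fix k
  show "P x l q k * (f k)\<^sup>2 \<le> (f k)\<^sup>2"
    using P_le1[of x l q k] P_pos[of x l q k] by (intro mult_left_le_one_le) auto
qed

lemma sq_le_sum: "(\<Sum>i\<in>UNIV. (x i)\<^sup>2) \<le> (1::real) \<Longrightarrow> \<bar>x (i::'i::finite)\<bar> \<le> 1"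
proof -
  assume a: "(\<Sum>i\<in>UNIV. (x i)\<^sup>2) \<le> (1::real)"
  have "(x i)\<^sup>2 \<le> (\<Sum>i\<in>UNIV. (x i)\<^sup>2)" by (rule member_le_sum) auto
  with a have "(x i)\<^sup>2 \<le> 1\<^sup>2" by simp
  thus ?thesis using abs_le_square_iff by (metis abs_one)
qed

lemma spec_bdd: "bdd_above {(\<Sum>i\<in>UNIV. \<Sum>j\<in>UNIV. x i * (M :: 'i::finite \<Rightarrow> 'i \<Rightarrow> real) i j * y j) | x y.
      (\<Sum>i\<in>UNIV. (x i)\<^sup>2) \<le> 1 \<and> (\<Sum>j\<in>UNIV. (y j)\<^sup>2) \<le> (1::real)}"
  unfolding bdd_above_def
proof (intro exI ballI)
  fix z assume "z \<in> {(\<Sum>i\<in>UNIV. \<Sum>j\<in>UNIV. x i * M i j * y j) | x y.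
      (\<Sum>i\<in>UNIV. (x i)\<^sup>2) \<le> 1 \<and> (\<Sum>j\<in>UNIV. (y j)\<^sup>2) \<le> (1::real)}"
  then obtain x y where z: "z = (\<Sum>i\<in>UNIV. \<Sum>j\<in>UNIV. x i * M i (j::'i::finite) * y j)"
    and x: "(\<Sum>i\<in>UNIV. (x i)\<^sup>2) \<le> 1" and y: "(\<Sum>j\<in>UNIV. (y j)\<^sup>2) \<le> (1::real)" by blast
  have "z \<le> (\<Sum>i\<in>UNIV. \<Sum>j\<in>UNIV. \<bar>M i j\<bar>)"
    unfolding z
  proof (intro sum_mono)
    fix i j
    have "x i * M i j * y j \<le> \<bar>x i\<bar> * \<bar>M i j\<bar> * \<bar>y j\<bar>" by (simp add: abs_mult[symmetric])
    also have "\<dots> \<le> 1 * \<bar>M i j\<bar> * 1"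
      using sq_le_sum[OF x, of i] sq_le_sum[OF y, of j]
      by (intro mult_mono) auto
    finally show "x i * M i j * y j \<le> \<bar>M i j\<bar>" by simp
  qed
  thus "z \<le> (\<Sum>i\<in>UNIV. \<Sum>j\<in>UNIV. \<bar>M i j\<bar>)" .
qed

lemma spec_ge: "(\<Sum>i\<in>UNIV. (x i)\<^sup>2) \<le> 1 \<Longrightarrow> (\<Sum>j\<in>UNIV. (y j)\<^sup>2) \<le> 1 \<Longrightarrow>
   (\<Sum>i\<in>UNIV. \<Sum>j\<in>UNIV. x i * M i j * y j) \<le> spec_norm (M :: 'i::finite \<Rightarrow> 'i \<Rightarrow> real)"
  unfolding spec_norm_def by (rule cSup_upper[OF _ spec_bdd]) blast

lemma spec_nonneg: "0 \<le> spec_norm (M :: 'i::finite \<Rightarrow> 'i \<Rightarrow> real)"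
  using spec_ge[of "\<lambda>_. 0" "\<lambda>_. 0" M] by simp

lemma spec_quad: "(\<Sum>a\<in>UNIV. \<Sum>b\<in>UNIV. v a * M a b * v b) \<le> spec_norm (M :: 'i::finite \<Rightarrow> 'i \<Rightarrow> real) * (\<Sum>a\<in>UNIV. (v a)\<^sup>2)"
proof (cases "(\<Sum>a\<in>UNIV. (v a)\<^sup>2) = 0")
  case True
  hence "\<And>a. v a = 0" by (simp add: sum_nonneg_eq_0_iff)
  thus ?thesis by simp
next
  case False
  define n where "n = (\<Sum>a\<in>UNIV. (v a)\<^sup>2)"
  have n0: "n > 0" using False unfolding n_def by (simp add: order_le_neq_trans[OF sum_nonneg] )
  define r where "r = sqrt n"
  have r0: "r > 0" and rr: "r * r = n" using n0 unfolding r_def by auto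
  have "(\<Sum>a\<in>UNIV. (v a / r)\<^sup>2) = n / (r * r)"
    unfolding n_def by (simp add: power_divide sum_divide_distrib[symmetric] power2_eq_square)
  hence s1: "(\<Sum>a\<in>UNIV. (v a / r)\<^sup>2) \<le> 1" using rr n0 by simp
  have "(\<Sum>a\<in>UNIV. \<Sum>b\<in>UNIV. (v a / r) * M a b * (v b / r)) \<le> spec_norm M"
    by (rule spec_ge[OF s1 s1])
  moreover have "(\<Sum>a\<in>UNIV. \<Sum>b\<in>UNIV. (v a / r) * M a b * (v b / r)) = (\<Sum>a\<in>UNIV. \<Sum>b\<in>UNIV. v a * M a b * v b) / n"
    by (simp add: rr[symmetric] sum_divide_distrib)
  ultimately show ?thesis using n0 unfolding n_def[symmetric] by (simp add: divide_le_eq mult.commute)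
qed

lemma spec_le:
  assumes h: "\<And>x y. (\<Sum>i\<in>UNIV. (x i)\<^sup>2) \<le> 1 \<Longrightarrow> (\<Sum>j\<in>UNIV. (y j)\<^sup>2) \<le> 1 \<Longrightarrow>
   (\<Sum>i\<in>UNIV. \<Sum>j\<in>UNIV. x i * M i j * y j) \<le> B"
  shows "spec_norm (M :: 'i::finite \<Rightarrow> 'i \<Rightarrow> real) \<le> B"
proof -
  have "\<exists>x y. (0::real) = (\<Sum>i\<in>UNIV. \<Sum>j\<in>UNIV. x i * M i j * y j) \<and> (\<Sum>i\<in>UNIV. (x i)\<^sup>2) \<le> 1 \<and> (\<Sum>j\<in>UNIV. (y j)\<^sup>2) \<le> 1"
    by (rule exI[of _ "\<lambda>_. 0"], rule exI[of _ "\<lambda>_. 0"]) simp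
  hence ne: "{(\<Sum>i\<in>UNIV. \<Sum>j\<in>UNIV. x i * M i j * y j) | x y.
      (\<Sum>i\<in>UNIV. (x i)\<^sup>2) \<le> 1 \<and> (\<Sum>j\<in>UNIV. (y j)\<^sup>2) \<le> 1} \<noteq> {}" by blast
  show ?thesis unfolding spec_norm_def by (rule cSup_least[OF ne]) (auto intro: h)
qed

lemma tensor_le:
  assumes h: "\<And>x y. (\<Sum>i\<in>UNIV. \<Sum>j\<in>UNIV. (x i j)\<^sup>2) \<le> 1 \<Longrightarrow> (\<Sum>k\<in>UNIV. (y k)\<^sup>2) \<le> 1 \<Longrightarrow>
   (\<Sum>i\<in>UNIV. \<Sum>j\<in>UNIV. \<Sum>k\<in>UNIV. A i j k * x i j * y k) \<le> B"
  shows "tensor_norm_12_3 (A :: 'i::finite \<Rightarrow> 'i \<Rightarrow> 'i \<Rightarrow> real) \<le> B"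
proof -
  have "\<exists>x y. (0::real) = (\<Sum>i\<in>UNIV. \<Sum>j\<in>UNIV. \<Sum>k\<in>UNIV. A i j k * x i j * y k) \<and> (\<Sum>i\<in>UNIV. \<Sum>j\<in>UNIV. (x i j)\<^sup>2) \<le> 1 \<and> (\<Sum>k\<in>UNIV. (y k)\<^sup>2) \<le> 1"
    by (rule exI[of _ "\<lambda>_ _. 0"], rule exI[of _ "\<lambda>_. 0"]) simp
  hence ne: "{(\<Sum>i\<in>UNIV. \<Sum>j\<in>UNIV. \<Sum>k\<in>UNIV. A i j k * x i j * y k) | x y.
      (\<Sum>i\<in>UNIV. \<Sum>j\<in>UNIV. (x i j)\<^sup>2) \<le> 1 \<and> (\<Sum>k\<in>UNIV. (y k)\<^sup>2) \<le> 1} \<noteq> {}" by blast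
  show ?thesis unfolding tensor_norm_12_3_def by (rule cSup_least[OF ne]) (auto intro: h)
qed

lemma quad_id: "(\<Sum>l\<in>L. c l * (x l \<bullet> (z::real^'o::finite))\<^sup>2)
   = (\<Sum>a\<in>UNIV. \<Sum>b\<in>UNIV. z $ a * (\<Sum>l\<in>L. x l $ a * x l $ b * c l) * z $ b)"
proof -
  have "(\<Sum>l\<in>L. c l * (x l \<bullet> z)\<^sup>2) = (\<Sum>l\<in>L. \<Sum>a\<in>UNIV. \<Sum>b\<in>UNIV. z $ a * (x l $ a * x l $ b * c l) * z $ b)"
    by (simp add: inner_vec_def power2_eq_square sum_product sum_distrib_left mult_ac)
  also have "\<dots> = (\<Sum>a\<in>UNIV. \<Sum>l\<in>L. \<Sum>b\<in>UNIV. z $ a * (x l $ a * x l $ b * c l) * z $ b)"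
    by (rule sum.swap)
  also have "\<dots> = (\<Sum>a\<in>UNIV. \<Sum>b\<in>UNIV. \<Sum>l\<in>L. z $ a * (x l $ a * x l $ b * c l) * z $ b)"
    by (rule sum.cong[OF refl], rule sum.swap)
  also have "\<dots> = (\<Sum>a\<in>UNIV. \<Sum>b\<in>UNIV. z $ a * (\<Sum>l\<in>L. x l $ a * x l $ b * c l) * z $ b)"
    by (simp add: sum_distrib_left sum_distrib_right)
  finally show ?thesis .
qed

lemma wsq_bound:
  assumes "finite L" "\<And>l. l \<in> L \<Longrightarrow> c l \<ge> 0"
  shows "(\<Sum>l\<in>L. \<Sum>k\<in>UNIV. c l * (w x l U k)\<^sup>2)
     \<le> spec_norm (\<lambda>a b. \<Sum>l\<in>L. x l $ a * x l $ b * c l) * (\<Sum>k\<in>UNIV. \<Sum>a\<in>UNIV. (U $ k $ a)\<^sup>2)"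
proof -
  have "(\<Sum>l\<in>L. \<Sum>k\<in>UNIV. c l * (w x l U k)\<^sup>2) = (\<Sum>k\<in>UNIV. \<Sum>l\<in>L. c l * (x l \<bullet> (U $ k))\<^sup>2)"
    unfolding w_def by (rule sum.swap)
  also have "\<dots> \<le> (\<Sum>k\<in>UNIV. spec_norm (\<lambda>a b. \<Sum>l\<in>L. x l $ a * x l $ b * c l) * (\<Sum>a\<in>UNIV. (U $ k $ a)\<^sup>2))"
    unfolding quad_id by (rule sum_mono) (rule spec_quad)
  finally show ?thesis by (simp add: sum_distrib_left)
qed

lemma inner_vecof2: "inner (vecof v) (vecof u) = (\<Sum>i\<in>UNIV. v i * u i)"
  by (simp add: inner_vec_def vecof_def sum_pair)

lemma sumsq_vecof: "(\<Sum>k\<in>UNIV. \<Sum>a\<in>UNIV. (vecof u $ k $ a)\<^sup>2) = (\<Sum>i\<in>UNIV. (u i)\<^sup>2)"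
  by (simp add: vecof_def sum_pair)

lemma part1:
  fixes x :: "nat \<Rightarrow> real^'o::finite" and q :: "real^'o^'m::finite"
  assumes "s > 0"
  shows "spec_norm (\<lambda>i j. pdiff i (pdiff j (potU s c N x y)) q)
           \<le> 1 / s\<^sup>2 + spec_norm (\<lambda>a b. \<Sum>l=1..N. x l $ a * x l $ b)"
proof (rule spec_le)
  fix u v :: "'m \<times> 'o \<Rightarrow> real"
  assume u: "(\<Sum>i\<in>UNIV. (u i)\<^sup>2) \<le> 1" and v: "(\<Sum>j\<in>UNIV. (v j)\<^sup>2) \<le> 1"
  define lam where "lam = spec_norm (\<lambda>a b. \<Sum>l=1..N. x l $ a * x l $ b)"
  have lam0: "lam \<ge> 0" unfolding lam_def by (rule spec_nonneg)
  have "(\<Sum>i\<in>UNIV. \<Sum>j\<in>UNIV. u i * pdiff i (pdiff j (potU s c N x y)) q * v j)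
      = (\<Sum>i\<in>UNIV. u i * (\<Sum>j\<in>UNIV. v j * F2 s N x (coord j) (coord i) q))"
    by (simp add: pdiff3 sum_distrib_left mult_ac)
  also have "\<dots> = (\<Sum>i\<in>UNIV. u i * F2 s N x (vecof v) (coord i) q)"
  proof -
    have "(\<Sum>j\<in>UNIV. v j * F2 s N x (coord j) (coord i) q) = F2 s N x (vecof v) (coord i) q" for i
      using lin_F2a[of s N x "coord i" q] unfolding lin_def by blast
    thus ?thesis by simp
  qed
  also have "\<dots> = F2 s N x (vecof v) (vecof u) q"
    using lin_F2b[of s N x "vecof v" q] unfolding lin_def by blast
  also have "\<dots> \<le> 1 / s\<^sup>2 + lam"
  proof -
    let ?V = "vecof v" and ?U = "vecof u"
    have "inner ?V ?U \<le> 1"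
    proof -
      have "0 \<le> (\<Sum>i\<in>UNIV. (v i - u i)\<^sup>2)" by (rule sum_nonneg) simp
      also have "\<dots> = (\<Sum>i\<in>UNIV. (v i)\<^sup>2) + (\<Sum>i\<in>UNIV. (u i)\<^sup>2) - 2 * (\<Sum>i\<in>UNIV. v i * u i)"
        by (simp add: power2_diff sum.distrib sum_subtractf sum_distrib_left mult.assoc)
      finally show ?thesis unfolding inner_vecof2 using u v by linarith
    qed
    hence t1: "inner ?V ?U / s\<^sup>2 \<le> 1 / s\<^sup>2" using assms by (simp add: divide_right_mono)
    have "(\<Sum>l=1..N. EP x l q (\<lambda>k. w x l ?V k * w x l ?U k) - EP x l q (w x l ?V) * EP x l q (w x l ?U))
       \<le> (\<Sum>l=1..N. ((\<Sum>k\<in>UNIV. 1 * (w x l ?V k)\<^sup>2) + (\<Sum>k\<in>UNIV. 1 * (w x l ?U k)\<^sup>2)) / 2)"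
    proof (rule sum_mono)
      fix l
      show "EP x l q (\<lambda>k. w x l ?V k * w x l ?U k) - EP x l q (w x l ?V) * EP x l q (w x l ?U)
        \<le> ((\<Sum>k\<in>UNIV. 1 * (w x l ?V k)\<^sup>2) + (\<Sum>k\<in>UNIV. 1 * (w x l ?U k)\<^sup>2)) / 2"
        using cov_le[of x l q "w x l ?V" "w x l ?U"] EP_sq_le[of x l q "w x l ?V"] EP_sq_le[of x l q "w x l ?U"]
        by simp
    qed
    also have "\<dots> = ((\<Sum>l=1..N. \<Sum>k\<in>UNIV. 1 * (w x l ?V k)\<^sup>2) + (\<Sum>l=1..N. \<Sum>k\<in>UNIV. 1 * (w x l ?U k)\<^sup>2)) / 2"
      by (simp only: sum.distrib[symmetric] sum_divide_distrib[symmetric])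
    also have "\<dots> \<le> (lam * (\<Sum>i\<in>UNIV. (v i)\<^sup>2) + lam * (\<Sum>i\<in>UNIV. (u i)\<^sup>2)) / 2"
      using wsq_bound[of "{1..N}" "\<lambda>_. 1" x ?V] wsq_bound[of "{1..N}" "\<lambda>_. 1" x ?U]
      unfolding sumsq_vecof lam_def by simp
    also have "\<dots> \<le> (lam * 1 + lam * 1) / 2"
      using u v lam0 by (intro divide_right_mono add_mono mult_left_mono) auto
    finally have t2: "(\<Sum>l=1..N. EP x l q (\<lambda>k. w x l ?V k * w x l ?U k) - EP x l q (w x l ?V) * EP x l q (w x l ?U)) \<le> lam"
      by simp
    show ?thesis unfolding F2_def using t1 t2 by linarith
  qed
  finally show "(\<Sum>i\<in>UNIV. \<Sum>j\<in>UNIV. u i * pdiff i (pdiff j (potU s c N x y)) q * v j) \<le> 1 / s\<^sup>2 + spec_norm (\<lambda>a b. \<Sum>l=1..N. x l $ a * x l $ b)"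
    unfolding lam_def .
qed

lemma EP_coord: "EP x l q (\<lambda>k. f k * w x l (coord (k0, a)) k) = P x l q k0 * f k0 * x l $ a"
  by (simp add: EP_def w_coord if_distrib cong: if_cong)

lemma EP_coord0: "EP x l q (w x l (coord (k0, a))) = P x l q k0 * x l $ a"
  using EP_coord[of x l q "\<lambda>_. 1" k0 a] by simp

definition Mt :: "(nat \<Rightarrow> real^'o::finite) \<Rightarrow> nat \<Rightarrow> real^'o^'m::finite \<Rightarrow> real^'o^'m \<Rightarrow> 'm \<Rightarrow> 'm \<Rightarrow> real" where
  "Mt x l q e k1 k2 = (if k1 = k2 then P x l q k1 * w x l e k1 else 0) - P x l q k2 * w x l e k2 * P x l q k1
     - P x l q k1 * w x l e k1 * P x l q k2 - EP x l q (w x l e) * (if k1 = k2 then P x l q k1 else 0)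
     + 2 * EP x l q (w x l e) * P x l q k1 * P x l q k2"

lemma G_eq: "F3 N x e (coord (k2, a2)) (coord (k1, a1)) q = (\<Sum>l=1..N. x l $ a1 * x l $ a2 * Mt x l q e k1 k2)"
  unfolding F3_def
proof (rule sum.cong[OF refl])
  fix l
  show "EP x l q (\<lambda>k. w x l e k * w x l (coord (k2, a2)) k * w x l (coord (k1, a1)) k) -
        EP x l q (\<lambda>k. w x l e k * w x l (coord (k2, a2)) k) * EP x l q (w x l (coord (k1, a1))) -
        EP x l q (\<lambda>k. w x l e k * w x l (coord (k1, a1)) k) * EP x l q (w x l (coord (k2, a2))) -
        EP x l q (w x l e) * EP x l q (\<lambda>k. w x l (coord (k2, a2)) k * w x l (coord (k1, a1)) k) +
        2 * EP x l q (w x l e) * EP x l q (w x l (coord (k2, a2))) * EP x l q (w x l (coord (k1, a1))) =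
        x l $ a1 * x l $ a2 * Mt x l q e k1 k2"
    unfolding EP_coord EP_coord0
    by (cases "k1 = k2") (simp_all add: w_coord Mt_def algebra_simps)
qed

lemma var_id: "EP x l q (\<lambda>k. (f k - EP x l q f)\<^sup>2) = EP x l q (\<lambda>k. (f k)\<^sup>2) - (EP x l q f)\<^sup>2"
proof -
  define m where "m = EP x l q f"
  have "EP x l q (\<lambda>k. (f k - m)\<^sup>2) = EP x l q (\<lambda>k. 1 * (f k)\<^sup>2 + (-2*m) * f k) + m\<^sup>2"
    using P_sum[of x l q] by (simp add: EP_def power2_diff algebra_simps sum.distrib sum_subtractf sum_distrib_left[symmetric] sum_distrib_right[symmetric])
  also have "\<dots> = EP x l q (\<lambda>k. (f k)\<^sup>2) - m\<^sup>2"
    unfolding EP_lin m_def by (simp add: power2_eq_square)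
  finally show ?thesis unfolding m_def .
qed

lemma Psq_sum: "(\<Sum>k\<in>UNIV. (P x l q k)\<^sup>2) \<le> 1"
proof -
  have "(\<Sum>k\<in>UNIV. (P x l q k)\<^sup>2) \<le> (\<Sum>k\<in>UNIV. P x l q k)"
  proof (rule sum_mono)
    fix k show "(P x l q k)\<^sup>2 \<le> P x l q k"
      using P_le1[of x l q k] P_pos[of x l q k] by (simp add: power2_eq_square mult_left_le_one_le)
  qed
  thus ?thesis using P_sum[of x l q] by simp
qed

lemma Mt_bound: "(\<Sum>k1\<in>UNIV. \<Sum>k2\<in>UNIV. (Mt x l q e k1 k2)\<^sup>2) \<le> 10 * (\<Sum>k\<in>UNIV. (w x l e k)\<^sup>2)"
proof -
  define m where "m = EP x l q (w x l e)"
  define v where "v k = w x l e k - m" for k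
  define p where "p k = P x l q k" for k
  define A where "A = (\<Sum>k\<in>UNIV. (p k)\<^sup>2 * (v k)\<^sup>2)"
  have A0: "A \<ge> 0" unfolding A_def by (rule sum_nonneg) simp
  have psq: "(\<Sum>k\<in>UNIV. (p k)\<^sup>2) \<le> 1" unfolding p_def by (rule Psq_sum)
  have Mform: "Mt x l q e k1 k2 = (if k1 = k2 then p k1 * v k1 else 0) - p k1 * p k2 * (v k1 + v k2)" for k1 k2
    unfolding Mt_def v_def p_def m_def by (cases "k1 = k2") (simp_all add: algebra_simps)
  have pt: "(Mt x l q e k1 k2)\<^sup>2 \<le> 2 * (if k1 = k2 then (p k1)\<^sup>2 * (v k1)\<^sup>2 else 0)
        + 4 * ((p k1)\<^sup>2 * (v k1)\<^sup>2 * (p k2)\<^sup>2) + 4 * ((p k2)\<^sup>2 * (v k2)\<^sup>2 * (p k1)\<^sup>2)" for k1 k2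
  proof -
    have a: "(X - Y)\<^sup>2 \<le> 2 * X\<^sup>2 + 2 * Y\<^sup>2" for X Y :: real
      using sum_squares_ge_zero[of "X + Y" 0] by (simp add: power2_eq_square algebra_simps)
    have b: "(p k1 * p k2 * (v k1 + v k2))\<^sup>2 \<le> 2 * ((p k1)\<^sup>2 * (v k1)\<^sup>2 * (p k2)\<^sup>2) + 2 * ((p k2)\<^sup>2 * (v k2)\<^sup>2 * (p k1)\<^sup>2)"
    proof -
      have "(v k1 + v k2)\<^sup>2 \<le> 2 * (v k1)\<^sup>2 + 2 * (v k2)\<^sup>2" using a[of "v k1" "- v k2"] by simp
      hence "(p k1 * p k2)\<^sup>2 * (v k1 + v k2)\<^sup>2 \<le> (p k1 * p k2)\<^sup>2 * (2 * (v k1)\<^sup>2 + 2 * (v k2)\<^sup>2)"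
        by (rule mult_left_mono) simp
      moreover have "(p k1 * p k2 * (v k1 + v k2))\<^sup>2 = (p k1 * p k2)\<^sup>2 * (v k1 + v k2)\<^sup>2"
        by (rule power_mult_distrib)
      moreover have "(p k1 * p k2)\<^sup>2 * (2 * (v k1)\<^sup>2 + 2 * (v k2)\<^sup>2) = 2 * ((p k1)\<^sup>2 * (v k1)\<^sup>2 * (p k2)\<^sup>2) + 2 * ((p k2)\<^sup>2 * (v k2)\<^sup>2 * (p k1)\<^sup>2)"
        by (simp add: power_mult_distrib algebra_simps)
      ultimately show ?thesis by simp
    qed
    have c: "(if k1 = k2 then p k1 * v k1 else 0)\<^sup>2 = (if k1 = k2 then (p k1)\<^sup>2 * (v k1)\<^sup>2 else 0)"
      by (simp add: power_mult_distrib)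
    show ?thesis unfolding Mform using a[of "if k1 = k2 then p k1 * v k1 else 0" "p k1 * p k2 * (v k1 + v k2)"] b c
      by linarith
  qed
  have "(\<Sum>k1\<in>UNIV. \<Sum>k2\<in>UNIV. (Mt x l q e k1 k2)\<^sup>2) \<le> (\<Sum>k1\<in>UNIV. \<Sum>k2\<in>UNIV. 2 * (if k1 = k2 then (p k1)\<^sup>2 * (v k1)\<^sup>2 else 0)
        + 4 * ((p k1)\<^sup>2 * (v k1)\<^sup>2 * (p k2)\<^sup>2) + 4 * ((p k2)\<^sup>2 * (v k2)\<^sup>2 * (p k1)\<^sup>2))"
    by (intro sum_mono pt)
  also have "\<dots> = 2 * A + 4 * (A * (\<Sum>k\<in>UNIV. (p k)\<^sup>2)) + 4 * (A * (\<Sum>k\<in>UNIV. (p k)\<^sup>2))"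
  proof -
    have s1: "(\<Sum>k1\<in>UNIV. \<Sum>k2\<in>UNIV. (if k1 = k2 then (p k1)\<^sup>2 * (v k1)\<^sup>2 else 0)) = A"
      unfolding A_def by (simp add: if_distrib cong: if_cong)
    have s2: "(\<Sum>k1\<in>UNIV. \<Sum>k2\<in>UNIV. (p k1)\<^sup>2 * (v k1)\<^sup>2 * (p k2)\<^sup>2) = A * (\<Sum>k\<in>UNIV. (p k)\<^sup>2)"
      unfolding A_def by (simp add: sum_product)
    have s2': "(\<Sum>k1\<in>UNIV. (p k1)\<^sup>2 * (v k1)\<^sup>2 * (\<Sum>k2\<in>UNIV. (p k2)\<^sup>2)) = A * (\<Sum>k\<in>UNIV. (p k)\<^sup>2)"
      unfolding A_def by (simp add: sum_distrib_right)
    have s3: "(\<Sum>k1\<in>UNIV. \<Sum>k2\<in>UNIV. (p k2)\<^sup>2 * (v k2)\<^sup>2 * (p k1)\<^sup>2) = A * (\<Sum>k\<in>UNIV. (p k)\<^sup>2)"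
      unfolding A_def by (simp add: sum_product mult.commute)
    show ?thesis
      by (simp only: sum.distrib sum_distrib_left[symmetric] s1 s2 s3 s2')
  qed
  also have "\<dots> \<le> 2 * A + 4 * (A * 1) + 4 * (A * 1)"
    using A0 psq by (intro add_mono mult_left_mono order_refl) auto
  also have "\<dots> = 10 * A" by simp
  also have "A \<le> EP x l q (\<lambda>k. (v k)\<^sup>2)"
    unfolding A_def EP_def p_def
  proof (rule sum_mono)
    fix k show "(P x l q k)\<^sup>2 * (v k)\<^sup>2 \<le> P x l q k * (v k)\<^sup>2"
      using P_le1[of x l q k] P_pos[of x l q k]
      by (intro mult_right_mono) (auto simp: power2_eq_square mult_left_le_one_le)
  qed
  also have "EP x l q (\<lambda>k. (v k)\<^sup>2) \<le> EP x l q (\<lambda>k. (w x l e k)\<^sup>2)"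
    unfolding v_def m_def var_id by simp
  also have "\<dots> \<le> (\<Sum>k\<in>UNIV. (w x l e k)\<^sup>2)" by (rule EP_sq_le)
  finally show ?thesis by simp
qed

lemma swap3: "(\<Sum>a\<in>A. \<Sum>l\<in>B. \<Sum>l'\<in>C. f a l l') = (\<Sum>l\<in>B. \<Sum>l'\<in>C. \<Sum>a\<in>A. f a l l')"
proof -
  have "(\<Sum>a\<in>A. \<Sum>l\<in>B. \<Sum>l'\<in>C. f a l l') = (\<Sum>l\<in>B. \<Sum>a\<in>A. \<Sum>l'\<in>C. f a l l')"
    by (rule sum.swap)
  also have "\<dots> = (\<Sum>l\<in>B. \<Sum>l'\<in>C. \<Sum>a\<in>A. f a l l')"
    by (rule sum.cong[OF refl], rule sum.swap)
  finally show ?thesis .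
qed

lemma L1: "(\<Sum>a1\<in>UNIV. \<Sum>a2\<in>UNIV. (\<Sum>l\<in>L. x l $ a1 * x l $ a2 * m l)\<^sup>2)
   = (\<Sum>l\<in>L. \<Sum>l'\<in>L. m l * m l' * (x l \<bullet> (x l' :: real^'o::finite))\<^sup>2)"
proof -
  have "(\<Sum>a1\<in>UNIV. \<Sum>a2\<in>UNIV. (\<Sum>l\<in>L. x l $ a1 * x l $ a2 * m l)\<^sup>2)
     = (\<Sum>a1\<in>UNIV. \<Sum>a2\<in>UNIV. \<Sum>l\<in>L. \<Sum>l'\<in>L. (x l $ a1 * x l $ a2 * m l) * (x l' $ a1 * x l' $ a2 * m l'))"
    by (simp add: power2_eq_square sum_product)
  also have "\<dots> = (\<Sum>a1\<in>UNIV. \<Sum>l\<in>L. \<Sum>l'\<in>L. \<Sum>a2\<in>UNIV. (x l $ a1 * x l $ a2 * m l) * (x l' $ a1 * x l' $ a2 * m l'))"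
    by (rule sum.cong[OF refl], rule swap3)
  also have "\<dots> = (\<Sum>l\<in>L. \<Sum>l'\<in>L. \<Sum>a1\<in>UNIV. \<Sum>a2\<in>UNIV. (x l $ a1 * x l $ a2 * m l) * (x l' $ a1 * x l' $ a2 * m l'))"
    by (rule swap3)
  also have "\<dots> = (\<Sum>l\<in>L. \<Sum>l'\<in>L. m l * m l' * ((\<Sum>a1\<in>UNIV. x l $ a1 * x l' $ a1) * (\<Sum>a2\<in>UNIV. x l $ a2 * x l' $ a2)))"
    by (simp add: sum_product sum_distrib_left mult_ac)
  also have "\<dots> = (\<Sum>l\<in>L. \<Sum>l'\<in>L. m l * m l' * (x l \<bullet> x l')\<^sup>2)"
    by (simp add: inner_vec_def power2_eq_square)
  finally show ?thesis .
qed

lemma L2: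
  assumes "finite L"
  shows "(\<Sum>l\<in>L. \<Sum>l'\<in>L. m l * m l' * (x l \<bullet> (x l' :: real^'o::finite))\<^sup>2)
   \<le> (\<Sum>l\<in>L. (m l)\<^sup>2 * (\<Sum>l'\<in>L. (x l \<bullet> x l')\<^sup>2))"
proof -
  have "(\<Sum>l\<in>L. \<Sum>l'\<in>L. m l * m l' * (x l \<bullet> x l')\<^sup>2)
     \<le> (\<Sum>l\<in>L. \<Sum>l'\<in>L. ((m l)\<^sup>2 * (x l \<bullet> x l')\<^sup>2 + (m l')\<^sup>2 * (x l \<bullet> x l')\<^sup>2) / 2)"
  proof (intro sum_mono)
    fix l l'
    have "m l * m l' \<le> ((m l)\<^sup>2 + (m l')\<^sup>2) / 2"
      using sum_squares_ge_zero[of "m l - m l'" 0] by (simp add: power2_eq_square algebra_simps)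
    hence "m l * m l' * (x l \<bullet> x l')\<^sup>2 \<le> ((m l)\<^sup>2 + (m l')\<^sup>2) / 2 * (x l \<bullet> x l')\<^sup>2"
      by (rule mult_right_mono) simp
    thus "m l * m l' * (x l \<bullet> x l')\<^sup>2 \<le> ((m l)\<^sup>2 * (x l \<bullet> x l')\<^sup>2 + (m l')\<^sup>2 * (x l \<bullet> x l')\<^sup>2) / 2"
      by (simp add: algebra_simps add_divide_distrib)
  qed
  also have "\<dots> = ((\<Sum>l\<in>L. \<Sum>l'\<in>L. (m l)\<^sup>2 * (x l \<bullet> x l')\<^sup>2) + (\<Sum>l\<in>L. \<Sum>l'\<in>L. (m l')\<^sup>2 * (x l \<bullet> x l')\<^sup>2)) / 2"
    by (simp only: sum.distrib sum_divide_distrib[symmetric])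
  also have "(\<Sum>l\<in>L. \<Sum>l'\<in>L. (m l')\<^sup>2 * (x l \<bullet> x l')\<^sup>2) = (\<Sum>l\<in>L. \<Sum>l'\<in>L. (m l)\<^sup>2 * (x l \<bullet> x l')\<^sup>2)"
    by (subst sum.swap) (simp add: inner_commute)
  also have "((\<Sum>l\<in>L. \<Sum>l'\<in>L. (m l)\<^sup>2 * (x l \<bullet> x l')\<^sup>2) + (\<Sum>l\<in>L. \<Sum>l'\<in>L. (m l)\<^sup>2 * (x l \<bullet> x l')\<^sup>2)) / 2
     = (\<Sum>l\<in>L. (m l)\<^sup>2 * (\<Sum>l'\<in>L. (x l \<bullet> x l')\<^sup>2))"
    unfolding sum_distrib_left by (simp only: add_divide_distrib[symmetric] mult_2[symmetric])
  finally show ?thesis .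
qed

lemma CS2: "(\<Sum>i\<in>A. \<Sum>j\<in>B. f i j * g i j)\<^sup>2 \<le> (\<Sum>i\<in>A. \<Sum>j\<in>B. (f i j)\<^sup>2) * (\<Sum>i\<in>A. \<Sum>j\<in>B. ((g i j)::real)\<^sup>2)"
  using Cauchy_Schwarz_ineq_sum[of "\<lambda>p. f (fst p) (snd p)" "\<lambda>p. g (fst p) (snd p)" "A \<times> B"]
  by (simp add: sum.cartesian_product split_def)

lemma part2:
  fixes x :: "nat \<Rightarrow> real^'o::finite" and q :: "real^'o^'m::finite"
  shows "tensor_norm_12_3 (\<lambda>i j k. pdiff i (pdiff j (pdiff k (potU s c N x y))) q)
           \<le> 6 * sqrt (spec_norm (\<lambda>a b. \<Sum>l=1..N. x l $ a * x l $ b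
                                          * (\<Sum>k=1..N. (x l \<bullet> x k)\<^sup>2)))"
proof (rule tensor_le)
  fix X :: "'m \<times> 'o \<Rightarrow> 'm \<times> 'o \<Rightarrow> real" and Y :: "'m \<times> 'o \<Rightarrow> real"
  assume X: "(\<Sum>i\<in>UNIV. \<Sum>j\<in>UNIV. (X i j)\<^sup>2) \<le> 1" and Y: "(\<Sum>k\<in>UNIV. (Y k)\<^sup>2) \<le> 1"
  define lam where "lam = spec_norm (\<lambda>a b. \<Sum>l=1..N. x l $ a * x l $ b * (\<Sum>k=1..N. (x l \<bullet> x k)\<^sup>2))"
  have lam0: "lam \<ge> 0" unfolding lam_def by (rule spec_nonneg)
  define Yv where "Yv = vecof Y"
  define sl where "sl l = (\<Sum>k=1..N. (x l \<bullet> x k)\<^sup>2)" for l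
  define G where "G i j = F3 N x Yv (coord j) (coord i) q" for i j
  have S_eq: "(\<Sum>i\<in>UNIV. \<Sum>j\<in>UNIV. \<Sum>k\<in>UNIV. pdiff i (pdiff j (pdiff k (potU s c N x y))) q * X i j * Y k)
     = (\<Sum>i\<in>UNIV. \<Sum>j\<in>UNIV. X i j * G i j)"
  proof (intro sum.cong refl)
    fix i j
    have "(\<Sum>k\<in>UNIV. Y k * F3 N x (coord k) (coord j) (coord i) q) = G i j"
      using lin_F3[of N x "coord j" "coord i" q] unfolding lin_def G_def Yv_def by blast
    moreover have "(\<Sum>k\<in>UNIV. pdiff i (pdiff j (pdiff k (potU s c N x y))) q * X i j * Y k)
       = X i j * (\<Sum>k\<in>UNIV. Y k * F3 N x (coord k) (coord j) (coord i) q)"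
      unfolding pdiff3 by (simp add: sum_distrib_left mult_ac)
    ultimately show "(\<Sum>k\<in>UNIV. pdiff i (pdiff j (pdiff k (potU s c N x y))) q * X i j * Y k) = X i j * G i j"
      by simp
  qed
  have G_sum: "(\<Sum>i\<in>UNIV. \<Sum>j\<in>UNIV. (G i j)\<^sup>2) \<le> 10 * lam"
  proof -
    have "(\<Sum>i\<in>UNIV. \<Sum>j\<in>UNIV. (G i j)\<^sup>2)
       = (\<Sum>k1\<in>UNIV. \<Sum>a1\<in>UNIV. \<Sum>k2\<in>UNIV. \<Sum>a2\<in>UNIV. (\<Sum>l\<in>{1..N}. x l $ a1 * x l $ a2 * Mt x l q Yv k1 k2)\<^sup>2)"
      by (simp add: sum_pair G_def G_eq)
    also have "\<dots> = (\<Sum>k1\<in>UNIV. \<Sum>k2\<in>UNIV. \<Sum>a1\<in>UNIV. \<Sum>a2\<in>UNIV. (\<Sum>l\<in>{1..N}. x l $ a1 * x l $ a2 * Mt x l q Yv k1 k2)\<^sup>2)"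
      by (rule sum.cong[OF refl], rule sum.swap)
    also have "\<dots> = (\<Sum>k1\<in>UNIV. \<Sum>k2\<in>UNIV. \<Sum>l\<in>{1..N}. \<Sum>l'\<in>{1..N}. Mt x l q Yv k1 k2 * Mt x l' q Yv k1 k2 * (x l \<bullet> x l')\<^sup>2)"
      by (simp only: L1)
    also have "\<dots> \<le> (\<Sum>k1\<in>UNIV. \<Sum>k2\<in>UNIV. \<Sum>l\<in>{1..N}. (Mt x l q Yv k1 k2)\<^sup>2 * sl l)"
      unfolding sl_def by (intro sum_mono L2) simp
    also have "\<dots> = (\<Sum>l\<in>{1..N}. sl l * (\<Sum>k1\<in>UNIV. \<Sum>k2\<in>UNIV. (Mt x l q Yv k1 k2)\<^sup>2))"
    proof -
      have "(\<Sum>k1\<in>UNIV. \<Sum>k2\<in>UNIV. \<Sum>l\<in>{1..N}. (Mt x l q Yv k1 k2)\<^sup>2 * sl l)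
          = (\<Sum>l\<in>{1..N}. \<Sum>k1\<in>UNIV. \<Sum>k2\<in>UNIV. (Mt x l q Yv k1 k2)\<^sup>2 * sl l)"
        by (rule trans[OF swap3 swap3])
      thus ?thesis by (simp only: sum_distrib_left sum_distrib_right mult.commute)
    qed
    also have "\<dots> \<le> (\<Sum>l\<in>{1..N}. sl l * (10 * (\<Sum>k\<in>UNIV. (w x l Yv k)\<^sup>2)))"
      unfolding sl_def by (intro sum_mono mult_left_mono Mt_bound sum_nonneg) auto
    also have "\<dots> = 10 * (\<Sum>l\<in>{1..N}. \<Sum>k\<in>UNIV. sl l * (w x l Yv k)\<^sup>2)"
      by (simp add: sum_distrib_left mult_ac)
    also have "\<dots> \<le> 10 * (lam * (\<Sum>k\<in>UNIV. \<Sum>a\<in>UNIV. (Yv $ k $ a)\<^sup>2))"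
      using wsq_bound[of "{1..N}" sl x Yv] unfolding lam_def sl_def
      by (simp add: sum_nonneg)
    also have "\<dots> \<le> 10 * (lam * 1)"
      unfolding Yv_def sumsq_vecof using Y lam0 by (simp add: mult_left_le)
    finally show ?thesis by simp
  qed
  define S where "S = (\<Sum>i\<in>UNIV. \<Sum>j\<in>UNIV. X i j * G i j)"
  have "S\<^sup>2 \<le> (\<Sum>i\<in>UNIV. \<Sum>j\<in>UNIV. (X i j)\<^sup>2) * (\<Sum>i\<in>UNIV. \<Sum>j\<in>UNIV. (G i j)\<^sup>2)"
    unfolding S_def by (rule CS2)
  also have "\<dots> \<le> 1 * (10 * lam)"
    using X G_sum by (intro mult_mono) (auto intro!: sum_nonneg)
  finally have S2: "S\<^sup>2 \<le> 36 * lam" using lam0 by simp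
  have "S \<le> sqrt (S\<^sup>2)" by simp
  also have "\<dots> \<le> sqrt (36 * lam)" using S2 by (rule real_sqrt_le_mono)
  also have "\<dots> = 6 * sqrt lam" by (simp add: real_sqrt_mult)
  finally show "(\<Sum>i\<in>UNIV. \<Sum>j\<in>UNIV. \<Sum>k\<in>UNIV. pdiff i (pdiff j (pdiff k (potU s c N x y))) q * X i j * Y k)
      \<le> 6 * sqrt (spec_norm (\<lambda>a b. \<Sum>l=1..N. x l $ a * x l $ b * (\<Sum>k=1..N. (x l \<bullet> x k)\<^sup>2)))"
    unfolding S_eq S_def[symmetric] lam_def .
qed


theorem lemma15:
  fixes x :: "nat \<Rightarrow> real^'o::finite"
    and y :: "nat \<Rightarrow> 'm::finite"
    and N :: nat and \<sigma>0 c :: real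
  assumes "N \<ge> 1" and "\<sigma>0 > 0"
  shows "(\<forall>q :: real^'o^'m.
           spec_norm (\<lambda>i j. pdiff i (pdiff j (potU \<sigma>0 c N x y)) q)
           \<le> 1 / \<sigma>0\<^sup>2 + spec_norm (\<lambda>a b. \<Sum>l=1..N. x l $ a * x l $ b))
       \<and> (\<forall>q :: real^'o^'m.
           tensor_norm_12_3 (\<lambda>i j k. pdiff i (pdiff j (pdiff k (potU \<sigma>0 c N x y))) q)
           \<le> 6 * sqrt (spec_norm (\<lambda>a b. \<Sum>l=1..N. x l $ a * x l $ b
                                          * (\<Sum>k=1..N. (x l \<bullet> x k)\<^sup>2))))"
  using part1[OF assms(2)] part2 by blast

end
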